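(* Let $2\le k\le d$ and let $|\psi\rangle=\sum_{i=1}^dc_i|i\rangle|\underline{2^{d-i}}\rangle\in\mathbb{C}^d\otimes(\mathbb{C}^2)^{\otimes d}$ be a unit vector with $|c_1|\ge|c_2|\ge\cdots\ge|c_d|$, regarded as a pure state of $d+1$ parties (the qudit and $d$ qubits). Then $$\max_{|\varsigma\rangle\in\mathcal{P}^{(k)}}|\langle\varsigma|\psi\rangle|^2=\max_{|\sigma\rangle\in\mathcal{B}^{(k)}}|\langle\sigma|\psi\rangle|^2=\sum_{i=1}^{k-1}|c_i|^2,$$ the maxima being over pure states, and the value is attained by $|\psi^c\rangle=\big(\sum_{i=1}^{k-1}|c_i|^2\big)^{-1/2}\sum_{i=1}^{k-1}c_i|i\rangle|\underline{2^{d-i}}\rangle\in\mathcal{B}^{(k)}$ (whenever $\sum_{i=1}^{k-1}|c_i|^2>0$).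
   Context: $\{|i\rangle\}_{i=1}^d$ is an orthonormal basis of $\mathbb{C}^d$ and $|\underline{2^{d-i}}\rangle=|0\rangle^{\otimes(i-1)}\otimes|1\rangle\otimes|0\rangle^{\otimes(d-i)}\in(\mathbb{C}^2)^{\otimes d}$. A pure state of the $d+1$ parties is $k$-producible if it is a tensor product of factors each pertaining to at most $k$ parties; $\mathcal{P}^{(k)}$ denotes the $k$-producible states. $\mathcal{B}^{(k)}$ denotes the set of pure states of the form $\sum_{j\in J}d_j|j\rangle|\underline{2^{d-j}}\rangle$ with $J\subseteq\{1,\dots,d\}$, $|J|\le k-1$ (these are $k$-producible), together with their convex combinations for mixed states. *)

theory Defs
  imports Complex_Main
begin

text \<open>Parties are indexed 0..n-1; party p has local
  dimension dm p. A computational basis configuration is a function x assigning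
  to each party p < n a local index x p < dm p (and 0 to all other naturals).
  A (not necessarily normalised) vector is a map from configurations to complex
  amplitudes; values outside the configuration set are irrelevant.\<close>

definition configs :: "nat set \<Rightarrow> (nat \<Rightarrow> nat) \<Rightarrow> (nat \<Rightarrow> nat) set" where
  "configs S dm = {x. (\<forall>p\<in>S. x p < dm p) \<and> (\<forall>p. p \<notin> S \<longrightarrow> x p = 0)}"

definition restr :: "nat set \<Rightarrow> (nat \<Rightarrow> nat) \<Rightarrow> (nat \<Rightarrow> nat)" where
  "restr B x = (\<lambda>p. if p \<in> B then x p else 0)"

definition inner_st :: "nat \<Rightarrow> (nat \<Rightarrow> nat) \<Rightarrow> ((nat \<Rightarrow> nat) \<Rightarrow> complex)
    \<Rightarrow> ((nat \<Rightarrow> nat) \<Rightarrow> complex) \<Rightarrow> complex" where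
  "inner_st n dm phi psi = (\<Sum>x\<in>configs {..<n} dm. cnj (phi x) * psi x)"

definition is_state :: "nat \<Rightarrow> (nat \<Rightarrow> nat) \<Rightarrow> ((nat \<Rightarrow> nat) \<Rightarrow> complex) \<Rightarrow> bool" where
  "is_state n dm psi \<longleftrightarrow> (\<Sum>x\<in>configs {..<n} dm. (cmod (psi x))\<^sup>2) = 1"

definition k_producible :: "nat \<Rightarrow> (nat \<Rightarrow> nat) \<Rightarrow> nat \<Rightarrow> ((nat \<Rightarrow> nat) \<Rightarrow> complex) \<Rightarrow> bool" where
  "k_producible n dm k psi \<longleftrightarrow>
     (\<exists>P :: nat set set.
        \<Union>P = {..<n} \<and>
        (\<forall>B\<in>P. B \<noteq> {} \<and> card B \<le> k) \<and>
        (\<forall>A\<in>P. \<forall>B\<in>P. A \<noteq> B \<longrightarrow> A \<inter> B = {}) \<and>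
        (\<exists>f :: nat set \<Rightarrow> (nat \<Rightarrow> nat) \<Rightarrow> complex.
           \<forall>x\<in>configs {..<n} dm. psi x = (\<Prod>B\<in>P. f B (restr B x))))"

definition qdim :: "nat \<Rightarrow> nat \<Rightarrow> nat" where
  "qdim d p = (if p = 0 then d else 2)"

text \<open>Configuration of |j\<rangle>|2^(d-j)\<rangle> for j in 1..d: qudit in level j
  (local index j-1), qubit j equal to 1, all other qubits 0.\<close>
definition basis_cfg :: "nat \<Rightarrow> (nat \<Rightarrow> nat)" where
  "basis_cfg j = (\<lambda>p. if p = 0 then j - 1 else if p = j then 1 else 0)"

definition ket :: "nat \<Rightarrow> (nat \<Rightarrow> nat) \<Rightarrow> complex" where
  "ket j = (\<lambda>x. if x = basis_cfg j then 1 else 0)"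

definition wvec :: "nat set \<Rightarrow> (nat \<Rightarrow> complex) \<Rightarrow> (nat \<Rightarrow> nat) \<Rightarrow> complex" where
  "wvec J a = (\<lambda>x. \<Sum>j\<in>J. a j * ket j x)"

definition B_states :: "nat \<Rightarrow> nat \<Rightarrow> ((nat \<Rightarrow> nat) \<Rightarrow> complex) set" where
  "B_states d k = {s. is_state (Suc d) (qdim d) s \<and>
      (\<exists>J a. J \<subseteq> {1..d} \<and> card J \<le> k - 1 \<and> s = wvec J a)}"

definition is_max_value :: "real \<Rightarrow> 'a set \<Rightarrow> ('a \<Rightarrow> real) \<Rightarrow> bool" where
  "is_max_value S A f \<longleftrightarrow> (\<exists>x\<in>A. f x = S) \<and> (\<forall>x\<in>A. f x \<le> S)"

end

theory Submission
  imports Defs "HOL-Analysis.Convex"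
begin

lemma finite_configs: "finite (configs {..<n} dm)"
proof -
  define M where "M = Max (dm ` {..<n})"
  have "configs {..<n} dm \<subseteq> (\<lambda>l p. if p < n then l ! p else 0) ` {l. set l \<subseteq> {..M} \<and> length l = n}"
  proof
    fix x assume x: "x \<in> configs {..<n} dm"
    let ?l = "map x [0..<n]"
    have "\<forall>p<n. x p \<le> M"
    proof (intro allI impI)
      fix p assume p: "p < n"
      have "x p < dm p" using x p unfolding configs_def by auto
      moreover have "dm p \<le> M" unfolding M_def using p by (intro Max_ge) auto
      ultimately show "x p \<le> M" by simp
    qed
    hence "set ?l \<subseteq> {..M} \<and> length ?l = n" by auto
    moreover have "x = (\<lambda>p. if p < n then ?l ! p else 0)" using x unfolding configs_def by auto
    ultimately show "x \<in> (\<lambda>l p. if p < n then l ! p else 0) ` {l. set l \<subseteq> {..M} \<and> length l = n}"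
      by (intro image_eqI[where x="?l"]) simp_all
  qed
  moreover have "finite {l. set l \<subseteq> {..M} \<and> length l = n}"
    using finite_lists_length_eq[of "{..M}" n] by simp
  ultimately show ?thesis by (meson finite_imageI finite_subset)
qed

lemma basis_cfg_in: "1 \<le> i \<Longrightarrow> i \<le> d \<Longrightarrow> basis_cfg i \<in> configs {..<Suc d} (qdim d)"
  unfolding configs_def basis_cfg_def qdim_def by auto

lemma inj_basis: "inj_on basis_cfg {1..d}"
proof (rule inj_onI)
  fix i j assume "i \<in> {1..d}" "j \<in> {1..d}" "basis_cfg i = basis_cfg j"
  then have "basis_cfg i 0 = basis_cfg j 0" "1 \<le> i" "1 \<le> j" by auto
  then show "i = j" unfolding basis_cfg_def by simp
qed

lemma inner_wvec:
  "inner_st (Suc d) (qdim d) s (wvec {1..d} c) = (\<Sum>i\<in>{1..d}. cnj (s (basis_cfg i)) * c i)"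
proof -
  have "inner_st (Suc d) (qdim d) s (wvec {1..d} c)
     = (\<Sum>x\<in>configs {..<Suc d} (qdim d). \<Sum>j\<in>{1..d}. cnj (s x) * (c j * ket j x))"
    unfolding inner_st_def wvec_def by (simp add: sum_distrib_left)
  also have "\<dots> = (\<Sum>j\<in>{1..d}. \<Sum>x\<in>configs {..<Suc d} (qdim d). cnj (s x) * (c j * ket j x))"
    by (rule sum.swap)
  also have "\<dots> = (\<Sum>j\<in>{1..d}. cnj (s (basis_cfg j)) * c j)"
  proof (rule sum.cong[OF refl])
    fix j assume j: "j \<in> {1..d}"
    have "(\<Sum>x\<in>configs {..<Suc d} (qdim d). cnj (s x) * (c j * ket j x))
        = (\<Sum>x\<in>configs {..<Suc d} (qdim d). if x = basis_cfg j then cnj (s x) * c j else 0)"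
      unfolding ket_def by (rule sum.cong) auto
    also have "\<dots> = cnj (s (basis_cfg j)) * c j"
      using basis_cfg_in[of j d] j finite_configs by (simp add: sum.delta')
    finally show "(\<Sum>x\<in>configs {..<Suc d} (qdim d). cnj (s x) * (c j * ket j x)) = cnj (s (basis_cfg j)) * c j" .
  qed
  finally show ?thesis .
qed

lemma basis_eq: "1 \<le> i \<Longrightarrow> 1 \<le> j \<Longrightarrow> (basis_cfg i = basis_cfg j) = (i = j)"
proof
  assume "1 \<le> i" "1 \<le> j" "basis_cfg i = basis_cfg j"
  then have "basis_cfg i 0 = basis_cfg j 0" by simp
  then show "i = j" using \<open>1 \<le> i\<close> \<open>1 \<le> j\<close> unfolding basis_cfg_def by simp
qed simp

lemma wvec_at:
  assumes "J \<subseteq> {1..d}" "j \<in> J"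
  shows "wvec J a (basis_cfg j) = a j"
proof -
  have fJ: "finite J" using assms(1) finite_subset by blast
  have "wvec J a (basis_cfg j) = (\<Sum>i\<in>J. if i = j then a i else 0)"
    unfolding wvec_def ket_def
  proof (rule sum.cong[OF refl])
    fix i assume "i \<in> J"
    then have "1 \<le> i" "1 \<le> j" using assms by auto
    then have "(basis_cfg j = basis_cfg i) = (i = j)" using basis_eq[of j i] by auto
    then show "a i * (if basis_cfg j = basis_cfg i then 1 else 0) = (if i = j then a i else 0)" by simp
  qed
  also have "\<dots> = a j" using fJ assms(2) by simp
  finally show ?thesis .
qed

lemma wvec_out:
  assumes "x \<notin> basis_cfg ` J"
  shows "wvec J a x = 0"
  unfolding wvec_def ket_def using assms by (intro sum.neutral) auto

lemma norm_wvec: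
  assumes "J \<subseteq> {1..d}"
  shows "(\<Sum>x\<in>configs {..<Suc d} (qdim d). (cmod (wvec J a x))\<^sup>2) = (\<Sum>j\<in>J. (cmod (a j))\<^sup>2)"
proof -
  have sub: "basis_cfg ` J \<subseteq> configs {..<Suc d} (qdim d)" using assms by (auto intro!: basis_cfg_in)
  have inj: "inj_on basis_cfg J" using inj_basis assms by (rule inj_on_subset)
  have "(\<Sum>x\<in>configs {..<Suc d} (qdim d). (cmod (wvec J a x))\<^sup>2) = (\<Sum>x\<in>basis_cfg ` J. (cmod (wvec J a x))\<^sup>2)"
    by (rule sum.mono_neutral_right[OF finite_configs sub]) (simp add: wvec_out)
  also have "\<dots> = (\<Sum>j\<in>J. (cmod (wvec J a (basis_cfg j)))\<^sup>2)"
    using inj by (simp add: sum.reindex)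
  also have "\<dots> = (\<Sum>j\<in>J. (cmod (a j))\<^sup>2)"
    using wvec_at[OF assms] by simp
  finally show ?thesis .
qed

lemma top_sum:
  fixes g :: "nat \<Rightarrow> real"
  assumes mono: "\<forall>i j. 1 \<le> i \<longrightarrow> i \<le> j \<longrightarrow> j \<le> d \<longrightarrow> g j \<le> g i"
    and nn: "\<And>i. g i \<ge> 0" and Q: "Q \<subseteq> {1..d}" and cQ: "card Q \<le> m" and md: "m \<le> d"
  shows "sum g Q \<le> sum g {1..m}"
proof -
  define Q1 where "Q1 = Q \<inter> {1..m}"
  define Q2 where "Q2 = Q - {1..m}"
  define M2 where "M2 = {1..m} - Q"
  have fQ: "finite Q" using Q finite_subset by blast
  have "card Q = card Q1 + card Q2" unfolding Q1_def Q2_def using card_Int_Diff[OF fQ, of "{1..m}"] .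
  moreover have "card {1..m} = card Q1 + card M2" unfolding Q1_def M2_def
    using card_Int_Diff[OF finite_atLeastAtMost[of 1 m], of Q] by (simp add: Int_commute)
  ultimately have c: "card Q2 \<le> card M2" using cQ by simp
  have s2: "sum g Q2 \<le> card Q2 * g m"
  proof -
    have "sum g Q2 \<le> sum (\<lambda>_. g m) Q2"
    proof (rule sum_mono)
      fix i assume "i \<in> Q2"
      hence "m < i" "i \<le> d" "1 \<le> i" using Q unfolding Q2_def by auto
      show "g i \<le> g m"
      proof (cases "m = 0")
        case True
        then have "Q = {}" using cQ fQ by simp
        then show ?thesis using \<open>i \<in> Q2\<close> unfolding Q2_def by simp
      next
        case False
        then show ?thesis using mono[rule_format, of m i] \<open>m < i\<close> \<open>i \<le> d\<close> by simp
      qed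
    qed
    thus ?thesis by simp
  qed
  have s3: "card M2 * g m \<le> sum g M2"
  proof -
    have "sum (\<lambda>_. g m) M2 \<le> sum g M2"
    proof (rule sum_mono)
      fix j assume "j \<in> M2"
      hence "1 \<le> j" "j \<le> m" unfolding M2_def by auto
      thus "g m \<le> g j" using mono[rule_format, of j m] md by simp
    qed
    thus ?thesis by simp
  qed
  have "card Q2 * g m \<le> card M2 * g m" using c nn by (simp add: mult_right_mono)
  have "sum g Q = sum g Q1 + sum g Q2" unfolding Q1_def Q2_def using sum.Int_Diff[OF fQ, of g "{1..m}"] .
  moreover have "sum g {1..m} = sum g Q1 + sum g M2" unfolding Q1_def M2_def
    using sum.Int_Diff[OF finite_atLeastAtMost[of 1 m], of g Q] by (simp add: Int_commute)
  ultimately show ?thesis using s2 s3 \<open>card Q2 * g m \<le> card M2 * g m\<close> by linarith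
qed

lemma wvec_kprod:
  assumes J: "J \<subseteq> {1..d}" and cJ: "card J \<le> k - 1" and k: "1 \<le> k"
  shows "k_producible (Suc d) (qdim d) k (wvec J a)"
proof -
  define B0 where "B0 = insert 0 J"
  define P where "P = insert B0 ((\<lambda>p. {p}) ` ({1..d} - J))"
  define f where "f = (\<lambda>B y. if B = B0 then wvec J a y else (if y = (\<lambda>_. 0::nat) then 1 else (0::complex)))"
  have fJ: "finite J" using J finite_subset by blast
  have 0: "0 \<notin> J" using J by auto
  have "\<Union>P = B0 \<union> ({1..d} - J)" unfolding P_def by auto
  also have "\<dots> = {..<Suc d}"
  proof (rule set_eqI)
    fix p show "p \<in> B0 \<union> ({1..d} - J) \<longleftrightarrow> p \<in> {..<Suc d}"
      unfolding B0_def using J by (cases "p = 0") auto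
  qed
  finally have "\<Union>P = {..<Suc d}" .
  moreover have "\<forall>B\<in>P. B \<noteq> {} \<and> card B \<le> k"
  proof
    fix B assume "B \<in> P"
    then consider "B = B0" | p where "B = {p}" unfolding P_def by auto
    then show "B \<noteq> {} \<and> card B \<le> k"
    proof cases
      case 1
      have "card B0 = Suc (card J)" unfolding B0_def using fJ 0 by simp
      then show ?thesis using 1 cJ k unfolding B0_def by simp
    next
      case 2
      then show ?thesis using k by simp
    qed
  qed
  moreover have "\<forall>A\<in>P. \<forall>B\<in>P. A \<noteq> B \<longrightarrow> A \<inter> B = {}"
  proof (intro ballI impI)
    fix A B assume A: "A \<in> P" and B: "B \<in> P" and AB: "A \<noteq> B"
    show "A \<inter> B = {}"
    proof (cases "A = B0")
      case True
      then obtain p where "B = {p}" "p \<in> {1..d} - J" using B AB unfolding P_def by auto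
      then show ?thesis using True unfolding B0_def by auto
    next
      case False
      then obtain p where p: "A = {p}" "p \<in> {1..d} - J" using A unfolding P_def by auto
      show ?thesis
      proof (cases "B = B0")
        case True
        then show ?thesis using p unfolding B0_def by auto
      next
        case False
        then obtain q where "B = {q}" using B unfolding P_def by auto
        then show ?thesis using p AB by auto
      qed
    qed
  qed
  moreover have "\<forall>x\<in>configs {..<Suc d} (qdim d). wvec J a x = (\<Prod>B\<in>P. f B (restr B x))"
  proof
    fix x assume x: "x \<in> configs {..<Suc d} (qdim d)"
    have nb: "B0 \<notin> (\<lambda>p. {p}) ` ({1..d} - J)" unfolding B0_def by auto
    have injs: "inj_on (\<lambda>p. {p::nat}) ({1..d} - J)" by (simp add: inj_on_def)
    have e1: "(\<Prod>B\<in>P. f B (restr B x)) = f B0 (restr B0 x) * (\<Prod>B\<in>(\<lambda>p. {p}) ` ({1..d} - J). f B (restr B x))"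
      unfolding P_def by (rule prod.insert[OF _ nb]) simp
    have e2: "(\<Prod>B\<in>(\<lambda>p. {p}) ` ({1..d} - J). f B (restr B x)) = (\<Prod>p\<in>{1..d} - J. f {p} (restr {p} x))"
      using prod.reindex[OF injs, of "\<lambda>B. f B (restr B x)"] by (simp add: comp_def)
    have e3: "(\<Prod>p\<in>{1..d} - J. f {p} (restr {p} x)) = (\<Prod>p\<in>{1..d} - J. if x p = 0 then 1 else 0)"
    proof (rule prod.cong[OF refl])
      fix p assume p: "p \<in> {1..d} - J"
      have "{p} \<noteq> B0" unfolding B0_def using p by auto
      moreover have "(restr {p} x = (\<lambda>_. 0)) = (x p = 0)"
      proof
        assume "restr {p} x = (\<lambda>_. 0)"
        then have "restr {p} x p = 0" by simp
        then show "x p = 0" unfolding restr_def by simp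
      next
        assume "x p = 0"
        then show "restr {p} x = (\<lambda>_. 0)" unfolding restr_def by (simp add: fun_eq_iff)
      qed
      ultimately show "f {p} (restr {p} x) = (if x p = 0 then 1 else 0)" unfolding f_def by simp
    qed
    have e4: "f B0 (restr B0 x) = wvec J a (restr B0 x)" by (simp add: f_def)
    have eq: "(\<Prod>B\<in>P. f B (restr B x)) = wvec J a (restr B0 x) * (\<Prod>p\<in>{1..d} - J. if x p = 0 then 1 else 0)"
      using e1 e2 e3 e4 by simp
    show "wvec J a x = (\<Prod>B\<in>P. f B (restr B x))"
    proof (cases "\<forall>p\<in>{1..d} - J. x p = 0")
      case True
      have "restr B0 x = x"
      proof
        fix p show "restr B0 x p = x p"
        proof (cases "p \<in> B0")
          case True then show ?thesis unfolding restr_def by simp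
        next
          case False
          then have p0: "p \<noteq> 0" "p \<notin> J" unfolding B0_def by auto
          show ?thesis
          proof (cases "p \<le> d")
            case True
            then have "x p = 0" using \<open>\<forall>p\<in>{1..d} - J. x p = 0\<close> p0 by simp
            then show ?thesis unfolding restr_def by simp
          next
            case False
            then have "x p = 0" using x unfolding configs_def by simp
            then show ?thesis unfolding restr_def by simp
          qed
        qed
      qed
      moreover have "(\<Prod>p\<in>{1..d} - J. if x p = 0 then 1 else (0::complex)) = 1"
        using True by (intro prod.neutral) simp
      ultimately show ?thesis using eq by simp
    next
      case False
      then obtain p where p: "p \<in> {1..d} - J" "x p \<noteq> 0" by auto
      have "(\<Prod>p\<in>{1..d} - J. if x p = 0 then 1 else (0::complex)) = 0"
        using p by (intro prod_zero) auto
      moreover have "wvec J a x = 0" unfolding wvec_def ket_def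
      proof (intro sum.neutral ballI)
        fix j assume "j \<in> J"
        then have "p \<noteq> j" "p \<noteq> 0" using p by auto
        then have "basis_cfg j p = 0" unfolding basis_cfg_def by simp
        hence "x \<noteq> basis_cfg j" using p by auto
        thus "a j * (if x = basis_cfg j then 1 else 0) = 0" by simp
      qed
      ultimately show ?thesis using eq by simp
    qed
  qed
  ultimately show ?thesis unfolding k_producible_def by blast
qed

lemma kprod_bound:
  fixes c :: "nat \<Rightarrow> complex"
  assumes kp: "k_producible (Suc d) (qdim d) k s" and st: "is_state (Suc d) (qdim d) s"
    and mono: "\<forall>i j. 1 \<le> i \<longrightarrow> i \<le> j \<longrightarrow> j \<le> d \<longrightarrow> cmod (c j) \<le> cmod (c i)"
    and k2: "2 \<le> k" and kd: "k \<le> d"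
  shows "(cmod (\<Sum>i\<in>{1..d}. cnj (s (basis_cfg i)) * c i))\<^sup>2 \<le> (\<Sum>i=1..k-1. (cmod (c i))\<^sup>2)"
proof -
  define T where "T = (\<Sum>i=1..k-1. (cmod (c i))\<^sup>2)"
  define C where "C = configs {..<Suc d} (qdim d)"
  from kp[unfolded k_producible_def] obtain P where H: "\<Union>P = {..<Suc d} \<and>
        (\<forall>B\<in>P. B \<noteq> {} \<and> card B \<le> k) \<and>
        (\<forall>A\<in>P. \<forall>B\<in>P. A \<noteq> B \<longrightarrow> A \<inter> B = {}) \<and>
        (\<exists>f :: nat set \<Rightarrow> (nat \<Rightarrow> nat) \<Rightarrow> complex.
           \<forall>x\<in>configs {..<Suc d} (qdim d). s x = (\<Prod>B\<in>P. f B (restr B x)))" ..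
  have UP: "\<Union>P = {..<Suc d}" using H[THEN conjunct1] .
  have PB: "\<forall>B\<in>P. B \<noteq> {} \<and> card B \<le> k" using H[THEN conjunct2, THEN conjunct1] .
  have Pdisj: "\<forall>A\<in>P. \<forall>B\<in>P. A \<noteq> B \<longrightarrow> A \<inter> B = {}" using H[THEN conjunct2, THEN conjunct2, THEN conjunct1] .
  obtain f :: "nat set \<Rightarrow> (nat \<Rightarrow> nat) \<Rightarrow> complex" where sf: "\<forall>x\<in>C. s x = (\<Prod>B\<in>P. f B (restr B x))"
    using H[THEN conjunct2, THEN conjunct2, THEN conjunct2] unfolding C_def ..
  have "0 \<in> \<Union>P" using UP by simp
  then obtain B0 where B0: "B0 \<in> P" "0 \<in> B0" by blast
  have finP: "finite P"
  proof (rule finite_subset)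
    show "P \<subseteq> Pow {..<Suc d}" using UP by blast
  qed simp
  have B0sub: "B0 \<subseteq> {..<Suc d}" using UP B0 by blast
  have finB0: "finite B0" using B0sub finite_subset by blast
  have cB0: "card B0 \<le> k" using PB B0 by blast
  define Q0 where "Q0 = {1..d} \<inter> B0"
  define N where "N = {1..d} - B0"
  define R where "R = {..<Suc d} - B0"
  have cQ0: "card Q0 \<le> k - 1"
  proof -
    have "Q0 \<subseteq> B0 - {0}" unfolding Q0_def by auto
    then have "card Q0 \<le> card (B0 - {0})" using finB0 by (intro card_mono) auto
    also have "\<dots> = card B0 - 1" using B0(2) finB0 by simp
    finally show ?thesis using cB0 by simp
  qed
  define \<beta> where "\<beta> = (\<lambda>x. \<Prod>B\<in>P - {B0}. f B (restr B x))"
  have sfac: "s x = f B0 (restr B0 x) * \<beta> x" if "x \<in> C" for x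
    using sf that finP B0(1) unfolding \<beta>_def by (simp add: prod.remove)
  have \<beta>eq: "\<beta> x = \<beta> y" if "\<forall>p\<in>R. x p = y p" for x y
    unfolding \<beta>_def
  proof (rule prod.cong[OF refl])
    fix B assume B: "B \<in> P - {B0}"
    have "B \<subseteq> R"
    proof
      fix p assume p: "p \<in> B"
      have "p \<in> {..<Suc d}" using UP B p by blast
      moreover have "B \<inter> B0 = {}" using Pdisj B B0(1) by blast
      ultimately show "p \<in> R" unfolding R_def using p by blast
    qed
    then have "restr B x = restr B y" using that unfolding restr_def by (auto simp: fun_eq_iff)
    then show "f B (restr B x) = f B (restr B y)" by simp
  qed
  define X where "X = (\<lambda>i j p. if p = 0 then i - 1 else if (p = i \<and> i \<in> B0) \<or> p = j then 1 else (0::nat))"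
  define Js where "Js = insert 0 N"
  have finN: "finite N" unfolding N_def by simp
  have N0: "0 \<notin> N" unfolding N_def by simp
  have XC: "X i j \<in> C" if "i \<in> {1..d}" "j \<in> Js" for i j
    using that unfolding C_def configs_def X_def qdim_def Js_def N_def by auto
  have injX: "inj_on (\<lambda>(i,j). X i j) ({1..d} \<times> Js)"
  proof (rule inj_onI, clarify)
    fix i j i' j' assume i: "i \<in> {1..d}" and j: "j \<in> Js" and i': "i' \<in> {1..d}" and j': "j' \<in> Js"
      and eq: "X i j = X i' j'"
    have "X i j 0 = X i' j' 0" using eq by simp
    then have "i - 1 = i' - 1" unfolding X_def by simp
    then have ii: "i = i'" using i i' by auto
    show "i = i' \<and> j = j'"
    proof (rule ccontr)
      assume "\<not> (i = i' \<and> j = j')"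
      then have jj: "j \<noteq> j'" using ii by simp
      show False
      proof (cases "j = 0")
        case True
        then have "j' \<in> N" using j' jj unfolding Js_def by simp
        then have "j' \<noteq> 0" "j' \<notin> B0" unfolding N_def by auto
        then have "X i' j' j' = 1" "X i j j' = 0" using True unfolding X_def by auto
        then show False using eq by simp
      next
        case False
        then have "j \<in> N" using j unfolding Js_def by simp
        then have "j \<noteq> 0" "j \<notin> B0" unfolding N_def by auto
        then have "X i j j = 1" "X i' j' j = 0" using jj unfolding X_def by auto
        then show False using eq by simp
      qed
    qed
  qed
  define A where "A = (\<lambda>i. f B0 (restr B0 (X i 0)))"
  define Bt where "Bt = (\<lambda>j. \<beta> (X 1 j))"
  have sX: "s (X i j) = A i * Bt j" if i: "i \<in> {1..d}" and j: "j \<in> Js" for i j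
  proof -
    have "restr B0 (X i j) = restr B0 (X i 0)"
    proof
      fix p show "restr B0 (X i j) p = restr B0 (X i 0) p"
      proof (cases "p \<in> B0")
        case True
        have "p \<noteq> j \<or> p = 0" using True j unfolding Js_def N_def by auto
        then show ?thesis using True unfolding restr_def X_def by auto
      qed (simp add: restr_def)
    qed
    moreover have "\<beta> (X i j) = \<beta> (X 1 j)"
    proof (rule \<beta>eq, rule ballI)
      fix p assume "p \<in> R"
      then have "p \<notin> B0" unfolding R_def by auto
      then have "p \<noteq> 0" "p \<notin> B0" using B0(2) by (metis, blast)
      then show "X i j p = X 1 j p" unfolding X_def by auto
    qed
    ultimately show ?thesis using sfac[OF XC[OF i j]] unfolding A_def Bt_def by simp
  qed
  define U where "U = (\<Sum>i\<in>{1..d}. (cmod (A i))\<^sup>2)"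
  define V where "V = (\<Sum>j\<in>Js. (cmod (Bt j))\<^sup>2)"
  have UV: "U * V \<le> 1"
  proof -
    have "U * V = (\<Sum>i\<in>{1..d}. \<Sum>j\<in>Js. (cmod (A i))\<^sup>2 * (cmod (Bt j))\<^sup>2)"
      unfolding U_def V_def by (rule sum_product)
    also have "\<dots> = (\<Sum>(i,j)\<in>{1..d} \<times> Js. (cmod (A i))\<^sup>2 * (cmod (Bt j))\<^sup>2)"
      by (rule sum.cartesian_product)
    also have "\<dots> = (\<Sum>(i,j)\<in>{1..d} \<times> Js. (cmod (s (X i j)))\<^sup>2)"
      by (rule sum.cong[OF refl]) (auto simp: sX norm_mult power_mult_distrib)
    also have "\<dots> = (\<Sum>x\<in>(\<lambda>(i,j). X i j) ` ({1..d} \<times> Js). (cmod (s x))\<^sup>2)"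
      using sum.reindex[OF injX, of "\<lambda>x. (cmod (s x))\<^sup>2"] by (simp add: comp_def case_prod_beta)
    also have "\<dots> \<le> (\<Sum>x\<in>C. (cmod (s x))\<^sup>2)"
    proof (rule sum_mono2)
      show "finite C" unfolding C_def by (rule finite_configs)
      show "(\<lambda>(i,j). X i j) ` ({1..d} \<times> Js) \<subseteq> C" using XC by auto
    qed simp
    also have "\<dots> = 1" using st unfolding is_state_def C_def .
    finally show ?thesis .
  qed
  define \<sigma> where "\<sigma> = (\<lambda>i. if i \<in> B0 then 0 else i)"
  have bX: "basis_cfg i = X i (\<sigma> i)" if "i \<in> {1..d}" for i
    using that unfolding basis_cfg_def X_def \<sigma>_def by (auto simp: fun_eq_iff)
  have \<sigma>J: "\<sigma> i \<in> Js" if "i \<in> {1..d}" for i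
    using that unfolding \<sigma>_def Js_def N_def by auto
  have sb: "s (basis_cfg i) = A i * Bt (\<sigma> i)" if "i \<in> {1..d}" for i
    using bX[OF that] sX[OF that \<sigma>J[OF that]] by simp
  define w where "w = (\<lambda>i. cmod (Bt (\<sigma> i)) * cmod (c i))"
  have n1: "cmod (\<Sum>i\<in>{1..d}. cnj (s (basis_cfg i)) * c i) \<le> (\<Sum>i\<in>{1..d}. cmod (A i) * w i)"
  proof -
    have "cmod (\<Sum>i\<in>{1..d}. cnj (s (basis_cfg i)) * c i) \<le> (\<Sum>i\<in>{1..d}. cmod (cnj (s (basis_cfg i)) * c i))"
      by (rule norm_sum)
    also have "\<dots> = (\<Sum>i\<in>{1..d}. cmod (A i) * w i)"
      by (rule sum.cong[OF refl]) (simp add: sb norm_mult w_def)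
    finally show ?thesis .
  qed
  have n2: "(cmod (\<Sum>i\<in>{1..d}. cnj (s (basis_cfg i)) * c i))\<^sup>2 \<le> U * (\<Sum>i\<in>{1..d}. (w i)\<^sup>2)"
  proof -
    have "(cmod (\<Sum>i\<in>{1..d}. cnj (s (basis_cfg i)) * c i))\<^sup>2 \<le> (\<Sum>i\<in>{1..d}. cmod (A i) * w i)\<^sup>2"
      using n1 by (intro power_mono) auto
    also have "\<dots> \<le> U * (\<Sum>i\<in>{1..d}. (w i)\<^sup>2)" unfolding U_def by (rule Cauchy_Schwarz_ineq_sum)
    finally show ?thesis .
  qed
  have T0: "0 \<le> T" unfolding T_def by (intro sum_nonneg) simp
  have cT: "(cmod (c i))\<^sup>2 \<le> T" if "i \<in> {1..d}" for i
  proof -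
    have "cmod (c i) \<le> cmod (c 1)" using mono[rule_format, of 1 i] that by simp
    then have "(cmod (c i))\<^sup>2 \<le> (cmod (c 1))\<^sup>2" by (intro power_mono) auto
    also have "\<dots> \<le> T" unfolding T_def
      using member_le_sum[of 1 "{1..k-1}" "\<lambda>i. (cmod (c i))\<^sup>2"] k2 by simp
    finally show ?thesis .
  qed
  have w2: "(\<Sum>i\<in>{1..d}. (w i)\<^sup>2) \<le> T * V"
  proof -
    have split: "(\<Sum>i\<in>{1..d}. (w i)\<^sup>2) = (\<Sum>i\<in>Q0. (w i)\<^sup>2) + (\<Sum>i\<in>N. (w i)\<^sup>2)"
      unfolding Q0_def N_def by (rule sum.Int_Diff) simp
    have "(\<Sum>i\<in>Q0. (w i)\<^sup>2) = (cmod (Bt 0))\<^sup>2 * (\<Sum>i\<in>Q0. (cmod (c i))\<^sup>2)"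
      unfolding w_def \<sigma>_def Q0_def by (simp add: sum_distrib_left power_mult_distrib)
    also have "\<dots> \<le> (cmod (Bt 0))\<^sup>2 * T"
    proof (rule mult_left_mono)
      show "(\<Sum>i\<in>Q0. (cmod (c i))\<^sup>2) \<le> T" unfolding T_def
      proof (rule top_sum[where d = d])
        show "\<forall>i j. 1 \<le> i \<longrightarrow> i \<le> j \<longrightarrow> j \<le> d \<longrightarrow> (cmod (c j))\<^sup>2 \<le> (cmod (c i))\<^sup>2"
          using mono by (auto intro!: power_mono)
        show "Q0 \<subseteq> {1..d}" unfolding Q0_def by auto
        show "card Q0 \<le> k - 1" by (rule cQ0)
        show "k - 1 \<le> d" using kd by simp
      qed simp
    qed simp
    finally have q: "(\<Sum>i\<in>Q0. (w i)\<^sup>2) \<le> (cmod (Bt 0))\<^sup>2 * T" .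
    have "(\<Sum>i\<in>N. (w i)\<^sup>2) \<le> (\<Sum>i\<in>N. (cmod (Bt i))\<^sup>2 * T)"
    proof (rule sum_mono)
      fix i assume i: "i \<in> N"
      then have "i \<notin> B0" "i \<in> {1..d}" unfolding N_def by auto
      then have "(w i)\<^sup>2 = (cmod (Bt i))\<^sup>2 * (cmod (c i))\<^sup>2"
        unfolding w_def \<sigma>_def by (simp add: power_mult_distrib)
      also have "\<dots> \<le> (cmod (Bt i))\<^sup>2 * T" using cT[OF \<open>i \<in> {1..d}\<close>] by (intro mult_left_mono) auto
      finally show "(w i)\<^sup>2 \<le> (cmod (Bt i))\<^sup>2 * T" .
    qed
    also have "\<dots> = (\<Sum>i\<in>N. (cmod (Bt i))\<^sup>2) * T" by (simp add: sum_distrib_right)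
    finally have nN: "(\<Sum>i\<in>N. (w i)\<^sup>2) \<le> (\<Sum>i\<in>N. (cmod (Bt i))\<^sup>2) * T" .
    have "V = (cmod (Bt 0))\<^sup>2 + (\<Sum>i\<in>N. (cmod (Bt i))\<^sup>2)"
      unfolding V_def Js_def using finN N0 by simp
    then have "T * V = (cmod (Bt 0))\<^sup>2 * T + (\<Sum>i\<in>N. (cmod (Bt i))\<^sup>2) * T"
      by (simp add: algebra_simps)
    then show ?thesis using split q nN by linarith
  qed
  have U0: "0 \<le> U" unfolding U_def by (intro sum_nonneg) simp
  have "(cmod (\<Sum>i\<in>{1..d}. cnj (s (basis_cfg i)) * c i))\<^sup>2 \<le> U * (T * V)"
    using n2 w2 U0 by (meson mult_left_mono order_trans)
  also have "\<dots> = T * (U * V)" by simp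
  also have "\<dots> \<le> T" using UV T0 by (simp add: mult_left_le)
  finally show ?thesis unfolding T_def .
qed

lemma psic_inner:
  fixes c :: "nat \<Rightarrow> complex"
  assumes T: "T = (\<Sum>i=1..m. (cmod (c i))\<^sup>2)" and md: "m \<le> d"
  shows "inner_st (Suc d) (qdim d) (wvec {1..m} (\<lambda>i. complex_of_real r * c i)) (wvec {1..d} c)
         = complex_of_real (r * T)"
proof -
  have sub: "{1..m} \<subseteq> {1..d}" using md by auto
  have "inner_st (Suc d) (qdim d) (wvec {1..m} (\<lambda>i. complex_of_real r * c i)) (wvec {1..d} c)
     = (\<Sum>i\<in>{1..d}. cnj (wvec {1..m} (\<lambda>i. complex_of_real r * c i) (basis_cfg i)) * c i)"
    by (rule inner_wvec)
  also have "\<dots> = (\<Sum>i\<in>{1..m}. cnj (wvec {1..m} (\<lambda>i. complex_of_real r * c i) (basis_cfg i)) * c i)"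
  proof (rule sum.mono_neutral_right)
    show "\<forall>i\<in>{1..d} - {1..m}. cnj (wvec {1..m} (\<lambda>i. complex_of_real r * c i) (basis_cfg i)) * c i = 0"
    proof
      fix i assume i: "i \<in> {1..d} - {1..m}"
      have "basis_cfg i \<notin> basis_cfg ` {1..m}"
      proof
        assume "basis_cfg i \<in> basis_cfg ` {1..m}"
        then obtain j where j: "j \<in> {1..m}" "basis_cfg i = basis_cfg j" by blast
        then have "i = j" using basis_eq[of i j] i by simp
        then show False using i j by simp
      qed
      then show "cnj (wvec {1..m} (\<lambda>i. complex_of_real r * c i) (basis_cfg i)) * c i = 0"
        by (simp add: wvec_out)
    qed
  qed (use sub in auto)
  also have "\<dots> = (\<Sum>i\<in>{1..m}. complex_of_real (r * (cmod (c i))\<^sup>2))"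
  proof (rule sum.cong[OF refl])
    fix i assume i: "i \<in> {1..m}"
    have "wvec {1..m} (\<lambda>i. complex_of_real r * c i) (basis_cfg i) = complex_of_real r * c i"
      by (rule wvec_at[OF sub i])
    then show "cnj (wvec {1..m} (\<lambda>i. complex_of_real r * c i) (basis_cfg i)) * c i = complex_of_real (r * (cmod (c i))\<^sup>2)"
      using complex_norm_square[of "c i"] by (simp add: mult.commute)
  qed
  also have "\<dots> = complex_of_real (r * T)" unfolding T by (simp add: sum_distrib_left)
  finally show ?thesis .
qed

theorem lemma1:
  fixes d k :: nat and c :: "nat \<Rightarrow> complex"
  assumes "2 \<le> k" and "k \<le> d"
    and "is_state (Suc d) (qdim d) (wvec {1..d} c)"
    and "\<forall>i j. 1 \<le> i \<longrightarrow> i \<le> j \<longrightarrow> j \<le> d \<longrightarrow> cmod (c j) \<le> cmod (c i)"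
  shows "is_max_value (\<Sum>i=1..k-1. (cmod (c i))\<^sup>2)
           {s. is_state (Suc d) (qdim d) s \<and> k_producible (Suc d) (qdim d) k s}
           (\<lambda>s. (cmod (inner_st (Suc d) (qdim d) s (wvec {1..d} c)))\<^sup>2)
       \<and> is_max_value (\<Sum>i=1..k-1. (cmod (c i))\<^sup>2)
           (B_states d k)
           (\<lambda>s. (cmod (inner_st (Suc d) (qdim d) s (wvec {1..d} c)))\<^sup>2)
       \<and> ((\<Sum>i=1..k-1. (cmod (c i))\<^sup>2) > 0 \<longrightarrow>
            (let psic = wvec {1..k-1}
                   (\<lambda>i. complex_of_real (1 / sqrt (\<Sum>i=1..k-1. (cmod (c i))\<^sup>2)) * c i)
             in psic \<in> B_states d k \<and>
                (cmod (inner_st (Suc d) (qdim d) psic (wvec {1..d} c)))\<^sup>2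
                  = (\<Sum>i=1..k-1. (cmod (c i))\<^sup>2)))"
proof -
  note k2 = assms(1) and kd = assms(2) and mono = assms(4)
  define T where "T = (\<Sum>i=1..k-1. (cmod (c i))\<^sup>2)"
  define r where "r = 1 / sqrt T"
  define psic where "psic = wvec {1..k-1} (\<lambda>i. complex_of_real r * c i)"
  have norm1: "(\<Sum>i\<in>{1..d}. (cmod (c i))\<^sup>2) = 1"
    using assms(3) norm_wvec[of "{1..d}" d c] unfolding is_state_def by simp
  have c1: "c 1 \<noteq> 0"
  proof
    assume c10: "c 1 = 0"
    have "(\<Sum>i\<in>{1..d}. (cmod (c i))\<^sup>2) = 0"
    proof (rule sum.neutral, rule ballI)
      fix i assume "i \<in> {1..d}"
      then have "cmod (c i) \<le> cmod (c 1)" using mono[rule_format, of 1 i] by simp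
      then show "(cmod (c i))\<^sup>2 = 0" using c10 by simp
    qed
    then show False using norm1 by simp
  qed
  have Tpos: "T > 0"
  proof -
    have "(cmod (c 1))\<^sup>2 \<le> T" unfolding T_def
      using member_le_sum[of 1 "{1..k-1}" "\<lambda>i. (cmod (c i))\<^sup>2"] k2 by simp
    moreover have "(cmod (c 1))\<^sup>2 > 0" using c1 by simp
    ultimately show ?thesis by linarith
  qed
  have sub: "{1..k-1} \<subseteq> {1..d}" using kd by auto
  have psic_state: "is_state (Suc d) (qdim d) psic"
  proof -
    have "(\<Sum>x\<in>configs {..<Suc d} (qdim d). (cmod (psic x))\<^sup>2) = (\<Sum>j\<in>{1..k-1}. (cmod (complex_of_real r * c j))\<^sup>2)"
      unfolding psic_def by (rule norm_wvec[OF sub])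
    also have "\<dots> = r\<^sup>2 * T" unfolding T_def by (simp add: norm_mult power_mult_distrib sum_distrib_left)
    also have "\<dots> = 1" unfolding r_def using Tpos by (simp add: power_divide)
    finally show ?thesis unfolding is_state_def .
  qed
  have psic_B: "psic \<in> B_states d k"
  proof -
    have "{1..k-1} \<subseteq> {1..d} \<and> card {1..k-1} \<le> k - 1 \<and> psic = wvec {1..k-1} (\<lambda>i. complex_of_real r * c i)"
      using sub unfolding psic_def by simp
    then show ?thesis unfolding B_states_def using psic_state by blast
  qed
  have psic_kp: "k_producible (Suc d) (qdim d) k psic"
    unfolding psic_def by (rule wvec_kprod[OF sub]) (use k2 in auto)
  have psic_val: "(cmod (inner_st (Suc d) (qdim d) psic (wvec {1..d} c)))\<^sup>2 = T"
  proof -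
    have "inner_st (Suc d) (qdim d) psic (wvec {1..d} c) = complex_of_real (r * T)"
      unfolding psic_def by (rule psic_inner[OF T_def]) (use kd in simp)
    moreover have "r * T = sqrt T"
    proof -
      have "r * T = T / sqrt T" unfolding r_def by simp
      also have "\<dots> = sqrt T" using Tpos by (intro real_div_sqrt) simp
      finally show ?thesis .
    qed
    ultimately show ?thesis using Tpos by simp
  qed
  have bound: "(cmod (inner_st (Suc d) (qdim d) s (wvec {1..d} c)))\<^sup>2 \<le> T"
    if "is_state (Suc d) (qdim d) s" "k_producible (Suc d) (qdim d) k s" for s
    unfolding inner_wvec T_def by (rule kprod_bound[OF that(2) that(1) mono k2 kd])
  have part1: "is_max_value T {s. is_state (Suc d) (qdim d) s \<and> k_producible (Suc d) (qdim d) k s}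
           (\<lambda>s. (cmod (inner_st (Suc d) (qdim d) s (wvec {1..d} c)))\<^sup>2)"
    unfolding is_max_value_def using psic_state psic_kp psic_val bound by blast
  have part2: "is_max_value T (B_states d k)
           (\<lambda>s. (cmod (inner_st (Suc d) (qdim d) s (wvec {1..d} c)))\<^sup>2)"
    unfolding is_max_value_def
  proof
    show "\<exists>x\<in>B_states d k. (cmod (inner_st (Suc d) (qdim d) x (wvec {1..d} c)))\<^sup>2 = T"
      using psic_B psic_val by blast
    show "\<forall>x\<in>B_states d k. (cmod (inner_st (Suc d) (qdim d) x (wvec {1..d} c)))\<^sup>2 \<le> T"
    proof
      fix s assume "s \<in> B_states d k"
      then obtain J a where s: "is_state (Suc d) (qdim d) s" "J \<subseteq> {1..d}" "card J \<le> k - 1" "s = wvec J a"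
        unfolding B_states_def by blast
      have "k_producible (Suc d) (qdim d) k s" unfolding s(4) by (rule wvec_kprod[OF s(2) s(3)]) (use k2 in simp)
      then show "(cmod (inner_st (Suc d) (qdim d) s (wvec {1..d} c)))\<^sup>2 \<le> T" using bound s(1) by blast
    qed
  qed
  have part3: "T > 0 \<longrightarrow> psic \<in> B_states d k \<and> (cmod (inner_st (Suc d) (qdim d) psic (wvec {1..d} c)))\<^sup>2 = T"
    using psic_B psic_val by blast
  show ?thesis using part1 part2 part3 unfolding T_def r_def psic_def Let_def by blast
qed

end
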